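(* Let $\Gamma$ be a group acting by measure class preserving transformations on a standard probability space $(B,\nu)$ such that the action is strongly almost transitive: for every measurable $A\subset B$ with $\nu(A)>0$ there exist $\gamma_n\in\Gamma$ with $\nu(\gamma_n^{-1}A)\to1$. Let $C$ be a standard Borel space with a measurable $\Gamma$-action, and let $\pi_1,\pi_2:B\to C$ be measurable maps with $\pi_i(\gamma x)=\gamma\pi_i(x)$ for all $\gamma\in\Gamma$ and $\nu$-a.e. $x$. Then either $\pi_1(x)=\pi_2(x)$ for $\nu$-a.e. $x\in B$, or the measures $(\pi_1)_*\nu$ and $(\pi_2)_*\nu$ are mutually singular. *)

theory Defs
  imports "HOL-Probability.Probability" "HOL-Algebra.Group"
begin

definition Polish_top :: "'a topology \<Rightarrow> bool" where
  "Polish_top X \<longleftrightarrow> completely_metrizable_space X \<and> separable_space X"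

definition standard_borel :: "'a measure \<Rightarrow> bool" where
  "standard_borel M \<longleftrightarrow>
     (\<exists>X. Polish_top X \<and> topspace X = space M \<and>
          sets M = sigma_sets (topspace X) {U. openin X U})"

definition measurable_action ::
    "('g, 'x) monoid_scheme \<Rightarrow> 'a measure \<Rightarrow> ('g \<Rightarrow> 'a \<Rightarrow> 'a) \<Rightarrow> bool" where
  "measurable_action G M act \<longleftrightarrow>
     (\<forall>g\<in>carrier G. act g \<in> M \<rightarrow>\<^sub>M M) \<and>
     (\<forall>x\<in>space M. act \<one>\<^bsub>G\<^esub> x = x) \<and>
     (\<forall>g\<in>carrier G. \<forall>h\<in>carrier G. \<forall>x\<in>space M.
        act (g \<otimes>\<^bsub>G\<^esub> h) x = act g (act h x))"

definition measure_class_preserving ::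
    "('g, 'x) monoid_scheme \<Rightarrow> 'a measure \<Rightarrow> ('g \<Rightarrow> 'a \<Rightarrow> 'a) \<Rightarrow> bool" where
  "measure_class_preserving G M act \<longleftrightarrow>
     (\<forall>g\<in>carrier G. \<forall>A\<in>sets M.
        emeasure M (act g -` A \<inter> space M) = 0 \<longleftrightarrow> emeasure M A = 0)"

definition strongly_almost_transitive ::
    "('g, 'x) monoid_scheme \<Rightarrow> 'a measure \<Rightarrow> ('g \<Rightarrow> 'a \<Rightarrow> 'a) \<Rightarrow> bool" where
  "strongly_almost_transitive G M act \<longleftrightarrow>
     (\<forall>A\<in>sets M. measure M A > 0 \<longrightarrow>
        (\<exists>g :: nat \<Rightarrow> 'g. (\<forall>n. g n \<in> carrier G) \<and>
           (\<lambda>n. measure M (act (g n) -` A \<inter> space M)) \<longlonglongrightarrow> 1))"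

definition mutually_singular :: "'a measure \<Rightarrow> 'a measure \<Rightarrow> bool" where
  "mutually_singular \<mu> \<nu> \<longleftrightarrow>
     (\<exists>S\<in>sets \<mu>. emeasure \<mu> S = 0 \<and> emeasure \<nu> (space \<nu> - S) = 0)"

end

theory Submission imports Defs begin

lemma (in Metric_space) sep_metric:
  assumes "countable C" "C \<subseteq> M" "mtopology closure_of C = M"
  shows "\<exists>U. countable U \<and> (\<forall>V\<in>U. openin mtopology V) \<and>
     (\<forall>x\<in>M. \<forall>y\<in>M. x \<noteq> y \<longrightarrow> (\<exists>V\<in>U. x \<in> V \<and> y \<notin> V))"
proof (intro exI conjI ballI impI)
  let ?U = "(\<lambda>(c,q). mball c (real_of_rat q)) ` (C \<times> UNIV)"
  show "countable ?U" using assms(1) by auto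
  show "openin mtopology V" if "V \<in> ?U" for V using that by auto
  fix x y assume xy: "x \<in> M" "y \<in> M" "x \<noteq> y"
  define r where "r = d x y / 3"
  have r: "r > 0" using xy by (simp add: r_def)
  obtain c where c: "c \<in> C" "c \<in> mball x r" using assms(3) xy r unfolding metric_closure_of by blast
  obtain q where q: "q \<in> \<rat>" "r < q" "q < 2 * r" using Rats_dense_in_real[of r "2*r"] r by auto
  then obtain q' where q': "q = real_of_rat q'" by (auto simp: Rats_def)
  have "d c y \<ge> d x y - d x c" using triangle[of x c y] c xy by (auto simp: commute)
  then have "x \<in> mball c q \<and> y \<notin> mball c q" using c q xy r by (auto simp: r_def commute)
  then show "\<exists>V\<in>?U. x \<in> V \<and> y \<notin> V" using c q' by (intro bexI[of _ "mball c q"]) auto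
qed

lemma polish_sep:
  assumes "Polish_top X"
  shows "\<exists>U. countable U \<and> (\<forall>V\<in>U. openin X V) \<and>
     (\<forall>x\<in>topspace X. \<forall>y\<in>topspace X. x \<noteq> y \<longrightarrow> (\<exists>V\<in>U. x \<in> V \<and> y \<notin> V))"
proof -
  obtain M d where md: "Metric_space M d" "X = Metric_space.mtopology M d"
    using assms unfolding Polish_top_def completely_metrizable_space_def by blast
  obtain C where C: "countable C" "C \<subseteq> topspace X" "X closure_of C = topspace X"
    using assms unfolding Polish_top_def separable_space_def by blast
  show ?thesis using Metric_space.sep_metric[OF md(1), of C] C md Metric_space.topspace_mtopology[OF md(1)]
    by auto
qed

theorem lemma7p2:
  fixes G :: "('g, 'x) monoid_scheme"
    and B :: "'b measure" and C :: "'c measure"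
    and actB :: "'g \<Rightarrow> 'b \<Rightarrow> 'b" and actC :: "'g \<Rightarrow> 'c \<Rightarrow> 'c"
    and \<pi>1 \<pi>2 :: "'b \<Rightarrow> 'c"
  assumes "group G"
    and "prob_space B" and "standard_borel B"
    and "measurable_action G B actB"
    and "measure_class_preserving G B actB"
    and "strongly_almost_transitive G B actB"
    and "standard_borel C"
    and "measurable_action G C actC"
    and "\<pi>1 \<in> B \<rightarrow>\<^sub>M C" and "\<pi>2 \<in> B \<rightarrow>\<^sub>M C"
    and "\<And>g. g \<in> carrier G \<Longrightarrow> AE x in B. \<pi>1 (actB g x) = actC g (\<pi>1 x)"
    and "\<And>g. g \<in> carrier G \<Longrightarrow> AE x in B. \<pi>2 (actB g x) = actC g (\<pi>2 x)"
  shows "(AE x in B. \<pi>1 x = \<pi>2 x) \<or> mutually_singular (distr B C \<pi>1) (distr B C \<pi>2)"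
proof (cases "AE x in B. \<pi>1 x = \<pi>2 x")
  case True
  then show ?thesis by blast
next
  case False
  note nAE = False
  interpret B: prob_space B by fact
  note p1 = assms(9) and p2 = assms(10)
  obtain X where X: "Polish_top X" "topspace X = space C" "sets C = sigma_sets (topspace X) {U. openin X U}"
    using assms(7) unfolding standard_borel_def by blast
  obtain U where U: "countable U" "\<And>V. V \<in> U \<Longrightarrow> openin X V"
    "\<And>x y. x \<in> topspace X \<Longrightarrow> y \<in> topspace X \<Longrightarrow> x \<noteq> y \<Longrightarrow> \<exists>V\<in>U. x \<in> V \<and> y \<notin> V"
    using polish_sep[OF X(1)] by metis
  have Vsets: "V \<in> sets C" if "V \<in> U" for V
    using U(2)[OF that] X(3) by (simp add: sigma_sets.Basic)
  define A where "A V = {x\<in>space B. \<pi>1 x \<in> V \<and> \<pi>2 x \<notin> V}" for V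
  have Asets: "A V \<in> sets B" if "V \<in> U" for V
  proof -
    have "A V = (\<pi>1 -` V \<inter> space B) \<inter> (\<pi>2 -` (space C - V) \<inter> space B)"
      using p1 p2 by (auto simp: A_def measurable_def)
    then show ?thesis using Vsets[OF that] p1 p2 by (auto intro!: measurable_sets)
  qed
  obtain V where V: "V \<in> U" "A V \<notin> null_sets B"
  proof (rule ccontr)
    assume "\<not> thesis"
    with that have "\<forall>V\<in>U. A V \<in> null_sets B" by blast
    then have N: "(\<Union>V\<in>U. A V) \<in> null_sets B" using U(1) by (intro null_sets_UN') auto
    have "{x\<in>space B. \<not> \<pi>1 x = \<pi>2 x} \<subseteq> (\<Union>V\<in>U. A V)"
    proof
      fix x assume x: "x \<in> {x\<in>space B. \<not> \<pi>1 x = \<pi>2 x}"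
      then have "\<pi>1 x \<in> topspace X" "\<pi>2 x \<in> topspace X"
        using p1 p2 X(2) by (auto simp: measurable_def)
      then obtain V where "V \<in> U" "\<pi>1 x \<in> V" "\<pi>2 x \<notin> V" using U(3) x by blast
      then show "x \<in> (\<Union>V\<in>U. A V)" using x by (auto simp: A_def)
    qed
    then have "AE x in B. \<pi>1 x = \<pi>2 x" using N by (intro AE_I') 
    with nAE show False by blast
  qed
  have Apos: "measure B (A V) > 0"
    using V Asets[OF V(1)] by (simp add: null_sets_def B.emeasure_eq_measure zero_less_measure_iff)
  obtain g where g: "\<And>n. g n \<in> carrier G"
    "(\<lambda>n. measure B (actB (g n) -` A V \<inter> space B)) \<longlonglongrightarrow> 1"
    using assms(6) Apos Asets[OF V(1)] unfolding strongly_almost_transitive_def by blast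
  have "\<exists>n. measure B (actB (g n) -` A V \<inter> space B) > 1 - (1/2)^k" for k :: nat
  proof -
    have "1 - (1/2::real)^k < 1" by simp
    from order_tendstoD(1)[OF g(2) this] show ?thesis by (auto dest: eventually_happens)
  qed
  then obtain n where n: "\<And>k. measure B (actB (g (n k)) -` A V \<inter> space B) > 1 - (1/2)^k"
    by metis
  define h where "h k = g (n k)" for k
  have h: "h k \<in> carrier G" for k using g(1) by (simp add: h_def)
  define F where "F k = actC (h k) -` V \<inter> space C" for k
  have actCm: "actC (h k) \<in> C \<rightarrow>\<^sub>M C" for k using assms(8) h unfolding measurable_action_def by blast
  have actBm: "actB (h k) \<in> B \<rightarrow>\<^sub>M B" for k using assms(4) h unfolding measurable_action_def by blast
  have Fsets: "F k \<in> sets C" for k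
    unfolding F_def using actCm Vsets[OF V(1)] by (rule measurable_sets)
  define E where "E k = actB (h k) -` A V \<inter> space B" for k
  have Esets: "E k \<in> sets B" for k
    unfolding E_def using actBm Asets[OF V(1)] by (rule measurable_sets)
  have E: "measure B (E k) > 1 - (1/2)^k" for k using n by (simp add: E_def h_def)
  have key1: "measure B (\<pi>1 -` F k \<inter> space B) \<ge> 1 - (1/2)^k" for k
  proof -
    have "AE x in B. x \<in> E k \<longrightarrow> x \<in> \<pi>1 -` F k \<inter> space B"
      using assms(11)[OF h[of k]]
    proof eventually_elim
      case (elim x)
      then show ?case using p1 by (auto simp: E_def A_def F_def measurable_def)
    qed
    then have "measure B (E k) \<le> measure B (\<pi>1 -` F k \<inter> space B)"
      using p1 Fsets by (intro B.finite_measure_mono_AE) (auto intro: measurable_sets)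
    then show ?thesis using E[of k] by linarith
  qed
  have key2: "measure B (\<pi>2 -` F k \<inter> space B) \<le> (1/2)^k" for k
  proof -
    have "AE x in B. x \<in> \<pi>2 -` F k \<inter> space B \<longrightarrow> x \<in> space B - E k"
      using assms(12)[OF h[of k]]
    proof eventually_elim
      case (elim x)
      then show ?case using p2 by (auto simp: E_def A_def F_def measurable_def)
    qed
    then have "measure B (\<pi>2 -` F k \<inter> space B) \<le> measure B (space B - E k)"
      using Esets by (intro B.finite_measure_mono_AE) auto
    also have "\<dots> = 1 - measure B (E k)" using Esets B.prob_compl by simp
    finally show ?thesis using E[of k] by linarith
  qed
  define \<nu>1 where "\<nu>1 = distr B C \<pi>1"
  define \<nu>2 where "\<nu>2 = distr B C \<pi>2"
  interpret N1: prob_space \<nu>1 unfolding \<nu>1_def using p1 by (rule B.prob_space_distr)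
  interpret N2: prob_space \<nu>2 unfolding \<nu>2_def using p2 by (rule B.prob_space_distr)
  have s1: "sets \<nu>1 = sets C" "space \<nu>1 = space C" by (simp_all add: \<nu>1_def)
  have s2: "sets \<nu>2 = sets C" "space \<nu>2 = space C" by (simp_all add: \<nu>2_def)
  have m1: "measure \<nu>1 (space C - F k) \<le> (1/2)^k" for k
  proof -
    have "measure \<nu>1 (space C - F k) = 1 - measure \<nu>1 (F k)"
      using N1.prob_compl[of "F k"] Fsets s1 by simp
    also have "measure \<nu>1 (F k) = measure B (\<pi>1 -` F k \<inter> space B)"
      unfolding \<nu>1_def using p1 Fsets by (rule measure_distr)
    finally show ?thesis using key1[of k] by linarith
  qed
  have m2: "measure \<nu>2 (F k) \<le> (1/2)^k" for k
  proof -
    have "measure \<nu>2 (F k) = measure B (\<pi>2 -` F k \<inter> space B)"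
      unfolding \<nu>2_def using p2 Fsets by (rule measure_distr)
    then show ?thesis using key2[of k] by linarith
  qed
  have sumg: "summable (\<lambda>k. (1/2::real)^k)" by (rule summable_geometric) simp
  have L1: "limsup (\<lambda>k. space C - F k) \<in> null_sets \<nu>1"
  proof (rule borel_cantelli_limsup1)
    show "space C - F k \<in> sets \<nu>1" for k using Fsets s1 by auto
    show "emeasure \<nu>1 (space C - F k) < \<infinity>" for k by (simp add: N1.emeasure_eq_measure)
    show "summable (\<lambda>k. measure \<nu>1 (space C - F k))"
      by (rule summable_comparison_test'[OF sumg]) (use m1 in auto)
  qed
  have L2: "limsup F \<in> null_sets \<nu>2"
  proof (rule borel_cantelli_limsup1)
    show "F k \<in> sets \<nu>2" for k using Fsets s2 by auto
    show "emeasure \<nu>2 (F k) < \<infinity>" for k by (simp add: N2.emeasure_eq_measure)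
    show "summable (\<lambda>k. measure \<nu>2 (F k))"
      by (rule summable_comparison_test'[OF sumg]) (use m2 in auto)
  qed
  define S where "S = limsup (\<lambda>k. space C - F k)"
  have sub: "space C - S \<subseteq> limsup F"
  proof
    fix x assume x: "x \<in> space C - S"
    then obtain m where m: "\<And>k. k \<ge> m \<Longrightarrow> x \<in> F k"
      by (auto simp: S_def limsup_INF_SUP)
    have "\<forall>j. \<exists>k\<ge>j. x \<in> F k" using m by (metis max.cobounded1 max.cobounded2)
    then show "x \<in> limsup F" unfolding limsup_INF_SUP by auto
  qed
  have "emeasure \<nu>2 (space \<nu>2 - S) = 0"
  proof -
    have "emeasure \<nu>2 (space \<nu>2 - S) \<le> emeasure \<nu>2 (limsup F)"
      using sub s2 L2 by (intro emeasure_mono) auto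
    then show ?thesis using L2 by (simp add: null_sets_def)
  qed
  moreover have "S \<in> sets \<nu>1" "emeasure \<nu>1 S = 0" using L1 by (auto simp: S_def)
  ultimately have "mutually_singular (distr B C \<pi>1) (distr B C \<pi>2)"
    unfolding mutually_singular_def by (intro bexI[of _ S]) (auto simp: \<nu>1_def \<nu>2_def)
  then show ?thesis by blast
qed
end
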